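(* Let $n\ge1$, $0<\tau_0\le\infty$, $\sigma\in J_n^+$, $\Lambda$ a continuous positive function, and let $V\ge0$ be continuous with $V(x,t)\ge\Lambda(t)|x|^\sigma$ for $|x|\ge1$, $0<t<\tau_0$. Then there are a non-increasing function $\eta:\mathbb{R}\to(0,\infty)$ and, for each $d\ge0$, a constant $\varepsilon_0>0$ such that: (i) for every $P\ge0$, $\mathcal{B}\big(V e^{-P|\cdot|}\big)(x,t)\ge\eta(P)\Lambda(t)e^{-P|x|}$ on $Q_{\tau_0}$; (ii) for every $d\ge0$, $\mathcal{B}\big(V|\cdot|^d\big)(x,t)\ge\varepsilon_0\Lambda(t)|x|^{\sigma+d}$ on $Q_{\tau_0}$; moreover, for $d$ ranging in a bounded subset of $[0,\infty)$, $\varepsilon_0$ can be chosen independent of $d$.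
   Context: $J_n^+=\{0\}\cup[1,\infty)$ if $n=1$, $[0,\infty)$ if $n\ge2$. $\mathcal{B}$ acts in the $x$-variable: $\mathcal{B}\varphi=B*\varphi$ with $B=\mathcal{F}^{-1}((1+|\xi|^2)^{-1})$. $Q_{\tau_0}=\mathbb{R}^n\times[0,\tau_0)$. *)

theory Defs
  imports "HOL-Analysis.Analysis"
begin

text \<open>Bessel kernel B = inverse Fourier transform of (1+|xi|^2)^(-1) on R^n
  (Fourier convention F f(xi) = int e^(-i x.xi) f(x) dx), written via the
  subordination formula  B(x) = int_0^oo (4 pi s)^(-n/2) e^(-|x|^2/(4s)) e^(-s) ds,
  valued in [0,oo] (B(0) = oo when n >= 2).\<close>
definition bessel_kernel :: "'a::euclidean_space \<Rightarrow> ennreal" where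
  "bessel_kernel x = (\<integral>\<^sup>+ s. ennreal (if 0 < s then
       (4 * pi * s) powr (- real DIM('a) / 2) * exp (- (norm x)\<^sup>2 / (4 * s)) * exp (- s)
     else 0) \<partial>lborel)"

definition bessel_op :: "('a::euclidean_space \<Rightarrow> real) \<Rightarrow> 'a \<Rightarrow> ennreal" where
  "bessel_op \<phi> x = (\<integral>\<^sup>+ y. bessel_kernel (x - y) * ennreal (\<phi> y) \<partial>lborel)"

definition rpow :: "real \<Rightarrow> real \<Rightarrow> real" where
  "rpow r a = (if a = 0 then 1 else r powr a)"

definition Jplus :: "nat \<Rightarrow> real set" where
  "Jplus n = (if n = 1 then {0} \<union> {1..} else {0..})"

definition time_int :: "ereal \<Rightarrow> real set" where
  "time_int \<tau>0 = {t. 0 \<le> t \<and> ereal t < \<tau>0}"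

end

theory Submission
  imports Defs
begin

definition kc :: "nat \<Rightarrow> real \<Rightarrow> real" where
  "kc n R = (8 * pi) powr (- real n / 2) * exp (- R\<^sup>2 / 4) * exp (- 2)"

lemma kc_pos: "0 < kc n R" by (simp add: kc_def)

lemma kernel_low:
  fixes z :: "'a::euclidean_space"
  assumes "norm z \<le> R"
  shows "ennreal (kc DIM('a) R) \<le> bessel_kernel z"
proof -
  let ?f = "\<lambda>s. ennreal (if 0 < s then
       (4 * pi * s) powr (- real DIM('a) / 2) * exp (- (norm z)\<^sup>2 / (4 * s)) * exp (- s)
     else 0)"
  have pw: "ennreal (kc DIM('a) R) * indicator {1..2} s \<le> ?f s" for s
  proof (cases "s \<in> {1..2}")
    case True
    then have s: "1 \<le> s" "s \<le> 2" by auto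
    have a: "(8 * pi) powr (- real DIM('a) / 2) \<le> (4 * pi * s) powr (- real DIM('a) / 2)"
      by (rule powr_mono2') (use s in auto)
    have "(norm z)\<^sup>2 / (4 * s) \<le> (norm z)\<^sup>2 / 4"
      using s by (intro divide_left_mono) auto
    also have "\<dots> \<le> R\<^sup>2 / 4"
      using assms norm_ge_zero[of z] by (intro divide_right_mono power_mono) auto
    finally have b: "exp (- R\<^sup>2 / 4) \<le> exp (- (norm z)\<^sup>2 / (4 * s))" by simp
    have c: "exp (-2) \<le> exp (- s)" using s by simp
    have "kc DIM('a) R \<le> (4 * pi * s) powr (- real DIM('a) / 2) * exp (- (norm z)\<^sup>2 / (4 * s)) * exp (- s)"
      unfolding kc_def
      by (intro mult_mono a b c) auto
    then show ?thesis using True s by (auto intro: ennreal_leI)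
  qed auto
  have "(\<integral>\<^sup>+ s. ennreal (kc DIM('a) R) * indicator {1..2::real} s \<partial>lborel) = ennreal (kc DIM('a) R) * emeasure lborel {1..2::real}"
    by (rule nn_integral_cmult_indicator) simp
  then have "ennreal (kc DIM('a) R) = (\<integral>\<^sup>+ s. ennreal (kc DIM('a) R) * indicator {1..2::real} s \<partial>lborel)"
    by simp
  also have "\<dots> \<le> bessel_kernel z"
    unfolding bessel_kernel_def by (intro nn_integral_mono pw)
  finally show ?thesis .
qed

lemma op_low:
  fixes x c :: "'a::euclidean_space"
  assumes "\<forall>y\<in>ball c 1. a \<le> g y \<and> norm (x - y) \<le> R" "0 \<le> a"
  shows "ennreal (kc DIM('a) R * unit_ball_vol (real DIM('a)) * a) \<le> bessel_op g x"
proof -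
  have pw: "ennreal (kc DIM('a) R * a) * indicator (ball c 1) y \<le> bessel_kernel (x - y) * ennreal (g y)" for y
  proof (cases "y \<in> ball c 1")
    case True
    then have "a \<le> g y" "norm (x - y) \<le> R" using assms by auto
    then have "ennreal (kc DIM('a) R) * ennreal a \<le> bessel_kernel (x - y) * ennreal (g y)"
      by (intro mult_mono kernel_low ennreal_leI) auto
    then show ?thesis using True kc_pos[of "DIM('a)" R] assms(2) by (simp add: ennreal_mult)
  qed auto
  have "ennreal (kc DIM('a) R * unit_ball_vol (real DIM('a)) * a)
      = (\<integral>\<^sup>+ y. ennreal (kc DIM('a) R * a) * indicator (ball c 1) y \<partial>lborel)"
  proof -
    have "(\<integral>\<^sup>+ y. ennreal (kc DIM('a) R * a) * indicator (ball c 1) y \<partial>lborel) = ennreal (kc DIM('a) R * a) * emeasure lborel (ball c 1)"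
      by (rule nn_integral_cmult_indicator) simp
    then show ?thesis
      using kc_pos[of "DIM('a)" R] assms(2)
      by (simp add: emeasure_ball ennreal_mult[symmetric] mult_ac)
  qed
  also have "\<dots> \<le> bessel_op g x"
    unfolding bessel_op_def by (intro nn_integral_mono pw)
  finally show ?thesis .
qed


lemma rpow_ge1: "1 \<le> r \<Longrightarrow> 0 \<le> a \<Longrightarrow> 1 \<le> rpow r a"
  by (simp add: rpow_def ge_one_powr_ge_zero)

lemma rpow_nonneg: "0 \<le> rpow r a"
  by (simp add: rpow_def)

lemma rpow_add: "0 < r \<Longrightarrow> 0 \<le> a \<Longrightarrow> 0 \<le> b \<Longrightarrow> rpow r (a + b) = rpow r a * rpow r b"
  by (simp add: rpow_def powr_add)

lemma rpow_mono: "0 \<le> r \<Longrightarrow> r \<le> r' \<Longrightarrow> 0 \<le> a \<Longrightarrow> rpow r a \<le> rpow r' a"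
  by (simp add: rpow_def powr_mono2)

theorem mainTheorem14:
  fixes V :: "'a::euclidean_space \<Rightarrow> real \<Rightarrow> real"
    and \<Lambda> :: "real \<Rightarrow> real" and \<sigma> :: real and \<tau>0 :: ereal
  assumes "0 < \<tau>0"
    and "\<sigma> \<in> Jplus DIM('a)"
    and "continuous_on (time_int \<tau>0) \<Lambda>"
    and "\<forall>t\<in>time_int \<tau>0. 0 < \<Lambda> t"
    and "continuous_on (UNIV \<times> time_int \<tau>0) (\<lambda>(x, t). V x t)"
    and "\<forall>x. \<forall>t\<in>time_int \<tau>0. 0 \<le> V x t"
    and "\<forall>x t. 1 \<le> norm x \<longrightarrow> 0 < t \<longrightarrow> ereal t < \<tau>0 \<longrightarrow>
           \<Lambda> t * rpow (norm x) \<sigma> \<le> V x t"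
  shows "\<exists>\<eta> :: real \<Rightarrow> real. antimono \<eta> \<and> (\<forall>P. 0 < \<eta> P) \<and>
     (\<forall>P \<ge> 0. \<forall>x. \<forall>t\<in>time_int \<tau>0.
        ennreal (\<eta> P * \<Lambda> t * exp (- P * norm x))
          \<le> bessel_op (\<lambda>y. V y t * exp (- P * norm y)) x) \<and>
     (\<forall>D. D \<subseteq> {0..} \<longrightarrow> bounded D \<longrightarrow>
        (\<exists>\<epsilon>0 > 0. \<forall>d\<in>D. \<forall>x. \<forall>t\<in>time_int \<tau>0.
           ennreal (\<epsilon>0 * \<Lambda> t * rpow (norm x) (\<sigma> + d))
             \<le> bessel_op (\<lambda>y. V y t * rpow (norm y) d) x))"
proof -
  have sig: "0 \<le> \<sigma>" using assms(2) by (auto simp: Jplus_def split: if_splits)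
  obtain t1 where t1: "0 < t1" "ereal t1 < \<tau>0"
  proof (cases \<tau>0)
    case (real r)
    then show ?thesis using assms(1) that[of "r/2"] by auto
  next
    case PInf
    then show ?thesis using that[of 1] by auto
  qed (use assms(1) in auto)
  have Vlow: "\<Lambda> t * rpow (norm y) \<sigma> \<le> V y t" if t: "t \<in> time_int \<tau>0" and y: "1 \<le> norm y" for t y
  proof (cases "t = 0")
    case False
    then show ?thesis using assms(7) t y by (auto simp: time_int_def)
  next
    case True
    define u where "u k = t1 / real (Suc k)" for k
    have u0: "u \<longlonglongrightarrow> 0" unfolding u_def
      by (intro tendsto_divide_0[OF tendsto_const] filterlim_at_top_imp_at_infinity
          filterlim_real_sequentially[THEN filterlim_compose] filterlim_Suc)
    have upos: "0 < u k" for k using t1 by (simp add: u_def)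
    have ule: "u k \<le> t1" for k using t1 by (simp add: u_def field_simps)
    have uin: "u k \<in> time_int \<tau>0" for k
    proof -
      have "ereal (u k) \<le> ereal t1" using ule[of k] by simp
      then have "ereal (u k) < \<tau>0" using t1(2) by (rule le_less_trans)
      then show ?thesis using upos[of k] by (auto simp: time_int_def)
    qed
    have t0: "0 \<in> time_int \<tau>0" using assms(1) by (simp add: time_int_def zero_ereal_def)
    have L: "(\<lambda>k. \<Lambda> (u k) * rpow (norm y) \<sigma>) \<longlonglongrightarrow> \<Lambda> 0 * rpow (norm y) \<sigma>"
      by (intro tendsto_mult tendsto_const continuous_on_tendsto_compose[OF assms(3) u0 t0])
        (use uin in auto)
    have "(\<lambda>k. (\<lambda>(x, t). V x t) (y, u k)) \<longlonglongrightarrow> (\<lambda>(x, t). V x t) (y, 0)"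
      by (intro continuous_on_tendsto_compose[OF assms(5)] tendsto_Pair tendsto_const u0)
        (use uin t0 in auto)
    then have R: "(\<lambda>k. V y (u k)) \<longlonglongrightarrow> V y 0" by simp
    have "\<Lambda> (u k) * rpow (norm y) \<sigma> \<le> V y (u k)" for k
      using assms(7) y upos[of k] uin[of k] by (auto simp: time_int_def)
    then have "\<Lambda> 0 * rpow (norm y) \<sigma> \<le> V y 0" by (intro LIMSEQ_le[OF L R]) auto
    then show ?thesis using True by simp
  qed
  have Vlow1: "\<Lambda> t \<le> V y t" if t: "t \<in> time_int \<tau>0" and y: "1 \<le> norm y" for t y
  proof -
    have "\<Lambda> t * 1 \<le> \<Lambda> t * rpow (norm y) \<sigma>"
      using assms(4) t rpow_ge1[OF y sig] by (intro mult_left_mono) auto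
    then show ?thesis using Vlow[OF t y] by simp
  qed
  define e :: 'a where "e = (SOME i. i \<in> Basis)"
  have ne: "norm e = 1" unfolding e_def by (simp add: SOME_Basis)
  define c where "c = 3 *\<^sub>R e"
  have ballc: "2 \<le> norm y \<and> norm y \<le> 4" if "y \<in> ball c 1" for y
  proof -
    have "norm (c - y) < 1" using that by (simp add: dist_norm)
    moreover have "norm c = 3" using ne by (simp add: c_def)
    moreover have "norm c \<le> norm y + norm (c - y)" "norm y \<le> norm c + norm (c - y)"
      using norm_triangle_ineq[of y "c - y"] norm_triangle_ineq[of c "y - c"]
      by (auto simp: norm_minus_commute)
    ultimately show ?thesis by linarith
  qed
  have ballx: "norm x - 1 \<le> norm y \<and> norm y \<le> norm x + 1 \<and> norm (x - y) \<le> 7" if "y \<in> ball x 1" for x y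
  proof -
    have "norm (x - y) < 1" using that by (simp add: dist_norm)
    moreover have "norm x \<le> norm y + norm (x - y)" "norm y \<le> norm x + norm (x - y)"
      using norm_triangle_ineq[of y "x - y"] norm_triangle_ineq[of x "y - x"]
      by (auto simp: norm_minus_commute)
    ultimately show ?thesis by linarith
  qed
  have ballc7: "norm (x - y) \<le> 7" if "y \<in> ball c 1" "norm x < 2" for x y
    using ballc[OF that(1)] norm_triangle_ineq4[of x y] that(2) by linarith
  define K where "K = kc DIM('a) 7 * unit_ball_vol (real DIM('a))"
  have Kpos: "0 < K" unfolding K_def using kc_pos by simp
  have bound: "ennreal (K * a) \<le> bessel_op g x"
    if "\<exists>c'. \<forall>y\<in>ball c' 1. a \<le> g y \<and> norm (x - y) \<le> 7" "0 \<le> a" for a g and x :: 'a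
    using that op_low[of _ a g x 7] unfolding K_def by (metis mult.assoc)
  define \<eta> where "\<eta> P = K * exp (- 4 * P)" for P
  have part1: "ennreal (\<eta> P * \<Lambda> t * exp (- P * norm x))
          \<le> bessel_op (\<lambda>y. V y t * exp (- P * norm y)) x"
    if P: "P \<ge> 0" and t: "t \<in> time_int \<tau>0" for P x t
  proof -
    have L: "0 < \<Lambda> t" using assms(4) t by auto
    let ?a = "\<Lambda> t * exp (- 4 * P) * exp (- P * norm x)"
    have "ennreal (K * ?a) \<le> bessel_op (\<lambda>y. V y t * exp (- P * norm y)) x"
    proof (rule bound)
      show "\<exists>c'. \<forall>y\<in>ball c' 1. ?a \<le> V y t * exp (- P * norm y) \<and> norm (x - y) \<le> 7"
      proof (cases "norm x \<ge> 2")
        case True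
        show ?thesis
        proof (intro exI ballI conjI)
          fix y assume y: "y \<in> ball x 1"
          note b = ballx[OF y]
          show "norm (x - y) \<le> 7" using b by simp
          have "exp (- 4 * P) * exp (- P * norm x) \<le> exp (- P * norm y)"
          proof -
            have "P * norm y \<le> P * (norm x + 1)" using b P by (intro mult_left_mono) auto
            then show ?thesis using P unfolding exp_add[symmetric] by (simp add: algebra_simps)
          qed
          then show "?a \<le> V y t * exp (- P * norm y)"
            using Vlow1[OF t, of y] b True L
            by (simp add: mult.assoc) (intro mult_mono, auto)
        qed
      next
        case False
        show ?thesis
        proof (intro exI[of _ c] ballI conjI)
          fix y assume y: "y \<in> ball c 1"
          note b = ballc[OF y]
          show "norm (x - y) \<le> 7" using ballc7[OF y] False by simp
          have "exp (- 4 * P) * exp (- P * norm x) \<le> exp (- P * norm y)"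
          proof -
            have "P * norm y \<le> P * 4" using b P by (intro mult_left_mono) auto
            moreover have "0 \<le> P * norm x" using P by simp
            ultimately show ?thesis unfolding exp_add[symmetric] by (simp add: algebra_simps)
          qed
          then show "?a \<le> V y t * exp (- P * norm y)"
            using Vlow1[OF t, of y] b L
            by (simp add: mult.assoc) (intro mult_mono, auto)
        qed
      qed
    qed (use L in auto)
    then show ?thesis by (simp add: \<eta>_def mult_ac)
  qed
  have part2: "\<exists>\<epsilon>0 > 0. \<forall>d\<in>D. \<forall>x. \<forall>t\<in>time_int \<tau>0.
           ennreal (\<epsilon>0 * \<Lambda> t * rpow (norm x) (\<sigma> + d))
             \<le> bessel_op (\<lambda>y. V y t * rpow (norm y) d) x"
    if D: "D \<subseteq> {0..}" "bounded D" for D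
  proof -
    obtain M where M: "\<forall>d\<in>D. norm d \<le> M" using D(2) by (auto simp: bounded_iff)
    define S where "S = \<sigma> + max M 0"
    have S: "0 \<le> S" using sig by (simp add: S_def)
    show ?thesis
    proof (intro exI[of _ "K * 2 powr (- S)"] conjI ballI allI)
      show "0 < K * 2 powr (- S)" using Kpos by simp
      fix d and x :: 'a and t assume d: "d \<in> D" and t: "t \<in> time_int \<tau>0"
      have d0: "0 \<le> d" using D d by auto
      have dS: "\<sigma> + d \<le> S" using M d by (auto simp: S_def)
      have L: "0 < \<Lambda> t" using assms(4) t by auto
      let ?a = "\<Lambda> t * (2 powr (- S) * rpow (norm x) (\<sigma> + d))"
      have "ennreal (K * ?a) \<le> bessel_op (\<lambda>y. V y t * rpow (norm y) d) x"
      proof (rule bound)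
        show "\<exists>c'. \<forall>y\<in>ball c' 1. ?a \<le> V y t * rpow (norm y) d \<and> norm (x - y) \<le> 7"
        proof (cases "norm x \<ge> 2")
          case True
          show ?thesis
          proof (intro exI ballI conjI)
            fix y assume y: "y \<in> ball x 1"
            note b = ballx[OF y]
            show "norm (x - y) \<le> 7" using b by simp
            have y1: "1 \<le> norm y" using b True by simp
            have "V y t * rpow (norm y) d \<ge> \<Lambda> t * rpow (norm y) \<sigma> * rpow (norm y) d"
              using Vlow[OF t y1] by (intro mult_right_mono rpow_nonneg)
            also have "\<Lambda> t * rpow (norm y) \<sigma> * rpow (norm y) d = \<Lambda> t * rpow (norm y) (\<sigma> + d)"
            proof -
              have "y \<noteq> 0" using y1 by auto
              then show ?thesis using rpow_add[of "norm y" \<sigma> d] sig d0 by (simp add: mult.assoc)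
            qed
            finally have A: "\<Lambda> t * rpow (norm y) (\<sigma> + d) \<le> V y t * rpow (norm y) d" .
            have "rpow (norm x / 2) (\<sigma> + d) \<le> rpow (norm y) (\<sigma> + d)"
              using b True sig d0 by (intro rpow_mono) auto
            moreover have "rpow (norm x / 2) (\<sigma> + d) = rpow (norm x) (\<sigma> + d) / 2 powr (\<sigma> + d)"
              using True by (simp add: rpow_def powr_divide)
            moreover have "2 powr (- S) * rpow (norm x) (\<sigma> + d) \<le> rpow (norm x) (\<sigma> + d) / 2 powr (\<sigma> + d)"
            proof -
              have "2 powr (- S) \<le> 1 / 2 powr (\<sigma> + d)"
              proof -
                have "2 powr (- S) \<le> 2 powr (- (\<sigma> + d))" using dS by (intro powr_mono) auto
                then show ?thesis by (simp only: powr_minus_divide)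
              qed
              then show ?thesis using rpow_nonneg[of "norm x" "\<sigma> + d"]
                by (metis mult_right_mono times_divide_eq_left mult_1)
            qed
            ultimately have "2 powr (- S) * rpow (norm x) (\<sigma> + d) \<le> rpow (norm y) (\<sigma> + d)" by simp
            then show "?a \<le> V y t * rpow (norm y) d"
              using A L by (meson mult_left_mono less_imp_le order_trans)
          qed
        next
          case False
          show ?thesis
          proof (intro exI[of _ c] ballI conjI)
            fix y assume y: "y \<in> ball c 1"
            note b = ballc[OF y]
            show "norm (x - y) \<le> 7" using ballc7[OF y] False by simp
            have y1: "1 \<le> norm y" using b by simp
            have A: "\<Lambda> t \<le> V y t * rpow (norm y) d"
              using Vlow1[OF t y1] rpow_ge1[OF y1 d0] assms(6) t
              by (metis mult_left_mono mult.right_neutral order_trans)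
            have "rpow (norm x) (\<sigma> + d) \<le> rpow 2 (\<sigma> + d)"
              using False sig d0 by (intro rpow_mono) auto
            also have "\<dots> \<le> 2 powr S"
              using dS S by (auto simp: rpow_def ge_one_powr_ge_zero)
            finally have "2 powr (- S) * rpow (norm x) (\<sigma> + d) \<le> 1"
              by (simp add: powr_minus field_simps)
            then have "?a \<le> \<Lambda> t" using L by (metis mult_left_mono mult.right_neutral less_imp_le)
            then show "?a \<le> V y t * rpow (norm y) d" using A by simp
          qed
        qed
      qed (use L rpow_nonneg in auto)
      then show "ennreal (K * 2 powr (- S) * \<Lambda> t * rpow (norm x) (\<sigma> + d))
             \<le> bessel_op (\<lambda>y. V y t * rpow (norm y) d) x" by (simp add: mult_ac)
    qed
  qed
  have anti: "antimono \<eta>"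
    by (auto simp: antimono_def \<eta>_def intro!: mult_left_mono Kpos[THEN less_imp_le])
  show ?thesis
    by (intro exI[of _ \<eta>] conjI anti allI impI ballI part1 part2)
       (auto simp: \<eta>_def Kpos)
qed

end
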